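(* There exists a super-core of some non-shrinking function $f:\{0,1\}^n\to\{0,1\}^{m(n)}$ (i.e. $m(n)\ge n$ for all $n$) computable by polynomial-size circuits if and only if there exists a super-bit $g:\{0,1\}^n\to\{0,1\}^{n+1}$.
   Context: $U_k$ is uniform on $\{0,1\}^k$. A generator $g:\{0,1\}^n\to\{0,1\}^{n+1}$ computable by polynomial-size circuits is a super-bit if for every nondeterministic polynomial-size circuit family $D$ (accepting iff some witness gives output 1), every polynomial $p$ and all sufficiently large $n$, $\Pr[D(U_{n+1})=1]-\Pr[D(g(U_n))=1]<1/p(n)$. A predicate $b$ computable by polynomial-size circuits is a super-core of $f:\{0,1\}^n\to\{0,1\}^{m(n)}$ if there do not exist a nondeterministic polynomial-size circuit family $\mathcal{A}_1$, a co-nondeterministic polynomial-size circuit family $\mathcal{A}_2$ (rejecting iff some witness gives output 0), a polynomial $p$ and infinitely many $n$ such that either $\Pr_{x\in\{0,1\}^n}[\mathcal{A}_1(f(x),1^n)=b(x)=0]+\tfrac12\Pr_{y\in\{0,1\}^{m(n)}}[\mathcal{A}_1(y,1^n)=1]\ge \tfrac12+\tfrac1{p(n)}$ or $\Pr_{x}[\mathcal{A}_2(f(x),1^n)=b(x)=1]+\tfrac12\Pr_{y}[\mathcal{A}_2(y,1^n)=0]\ge \tfrac12+\tfrac1{p(n)}$. *)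

theory Defs
  imports Main "HOL-Computational_Algebra.Polynomial"
begin

text \<open>Bit strings are boolean lists. A circuit is a list of gates (each gate may read
an input bit or previously computed wires) plus a list of output wires.\<close>

datatype gate = Input nat | Const bool | NotG nat | AndG nat nat | OrG nat nat

record circuit =
  gates :: "gate list"
  outs :: "nat list"

definition wire :: "bool list \<Rightarrow> nat \<Rightarrow> bool" where
  "wire vs i = (if i < length vs then vs ! i else False)"

fun gate_val :: "bool list \<Rightarrow> bool list \<Rightarrow> gate \<Rightarrow> bool" where
  "gate_val x vs (Input i) = wire x i"
| "gate_val x vs (Const c) = c"
| "gate_val x vs (NotG i) = (\<not> wire vs i)"
| "gate_val x vs (AndG i j) = (wire vs i \<and> wire vs j)"
| "gate_val x vs (OrG i j) = (wire vs i \<or> wire vs j)"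

definition circ_eval :: "circuit \<Rightarrow> bool list \<Rightarrow> bool list" where
  "circ_eval C x =
     (let vs = foldl (\<lambda>vs g. vs @ [gate_val x vs g]) [] (gates C)
      in map (wire vs) (outs C))"

definition circ_size :: "circuit \<Rightarrow> nat" where
  "circ_size C = length (gates C) + length (outs C)"

text \<open>Polynomials used as bounds: real polynomials with positive leading coefficient
(so that they are eventually positive).\<close>

definition pos_poly :: "real poly \<Rightarrow> bool" where
  "pos_poly p \<longleftrightarrow> lead_coeff p > 0"

definition poly_size_family :: "(nat \<Rightarrow> circuit) \<Rightarrow> bool" where
  "poly_size_family C \<longleftrightarrow> (\<exists>p. \<forall>n. real (circ_size (C n)) \<le> poly p (real n))"

definition poly_computable :: "(bool list \<Rightarrow> bool list) \<Rightarrow> bool" where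
  "poly_computable f \<longleftrightarrow> (\<exists>C. poly_size_family C \<and>
      (\<forall>n x. length x = n \<longrightarrow> circ_eval (C n) x = f x))"

definition poly_computable_pred :: "(bool list \<Rightarrow> bool) \<Rightarrow> bool" where
  "poly_computable_pred b \<longleftrightarrow> poly_computable (\<lambda>x. [b x])"

text \<open>A (co-)nondeterministic circuit is a circuit together with a witness length l;
it is run on input y @ w for witnesses w of length l, and outputs 1 iff its output is [True].\<close>

definition out1 :: "circuit \<Rightarrow> bool list \<Rightarrow> bool" where
  "out1 C z \<longleftrightarrow> circ_eval C z = [True]"

definition nd_accepts :: "circuit \<times> nat \<Rightarrow> bool list \<Rightarrow> bool" where
  "nd_accepts D y \<longleftrightarrow> (\<exists>w. length w = snd D \<and> out1 (fst D) (y @ w))"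

definition cond_accepts :: "circuit \<times> nat \<Rightarrow> bool list \<Rightarrow> bool" where
  "cond_accepts D y \<longleftrightarrow> (\<forall>w. length w = snd D \<longrightarrow> out1 (fst D) (y @ w))"

definition poly_size_nd_family :: "(nat \<Rightarrow> circuit \<times> nat) \<Rightarrow> bool" where
  "poly_size_nd_family D \<longleftrightarrow>
     (\<exists>p. \<forall>n. real (circ_size (fst (D n)) + snd (D n)) \<le> poly p (real n))"

definition Pr :: "nat \<Rightarrow> (bool list \<Rightarrow> bool) \<Rightarrow> real" where
  "Pr k P = real (card {x. length x = k \<and> P x}) / 2 ^ k"

definition super_bit :: "(bool list \<Rightarrow> bool list) \<Rightarrow> bool" where
  "super_bit g \<longleftrightarrow>
     (\<forall>x. length (g x) = Suc (length x)) \<and> poly_computable g \<and>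
     (\<forall>D p. poly_size_nd_family D \<and> pos_poly p \<longrightarrow>
        (\<forall>\<^sub>F n in sequentially.
           Pr (Suc n) (\<lambda>y. nd_accepts (D n) y) - Pr n (\<lambda>x. nd_accepts (D n) (g x))
             < 1 / poly p (real n)))"

definition super_core ::
  "(bool list \<Rightarrow> bool) \<Rightarrow> (bool list \<Rightarrow> bool list) \<Rightarrow> (nat \<Rightarrow> nat) \<Rightarrow> bool" where
  "super_core b f m \<longleftrightarrow> poly_computable_pred b \<and>
     \<not> (\<exists>A1 A2 p. poly_size_nd_family A1 \<and> poly_size_nd_family A2 \<and> pos_poly p \<and>
          (\<exists>\<^sub>F n in sequentially.
             Pr n (\<lambda>x. \<not> nd_accepts (A1 n) (f x @ replicate n True) \<and> \<not> b x)
               + 1/2 * Pr (m n) (\<lambda>y. nd_accepts (A1 n) (y @ replicate n True))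
               \<ge> 1/2 + 1 / poly p (real n)
           \<or> Pr n (\<lambda>x. cond_accepts (A2 n) (f x @ replicate n True) \<and> b x)
               + 1/2 * Pr (m n) (\<lambda>y. \<not> cond_accepts (A2 n) (y @ replicate n True))
               \<ge> 1/2 + 1 / poly p (real n)))"

end

theory Submission
  imports Defs
begin


definition vals :: "gate list \<Rightarrow> bool list \<Rightarrow> bool list" where
  "vals gs x = foldl (\<lambda>vs g. vs @ [gate_val x vs g]) [] gs"

lemma vals_snoc[simp]: "vals (gs @ [g]) x = vals gs x @ [gate_val x (vals gs x) g]"
  by (simp add: vals_def)

lemma vals_Nil[simp]: "vals [] x = []" by (simp add: vals_def)

lemma length_vals[simp]: "length (vals gs x) = length gs"
  by (induction gs rule: rev_induct) auto

lemma circ_eval_vals: "circ_eval C x = map (wire (vals (gates C) x)) (outs C)"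
  by (simp add: circ_eval_def vals_def)

fun shiftg :: "nat \<Rightarrow> gate \<Rightarrow> gate" where
  "shiftg k (Input i) = Input i"
| "shiftg k (Const c) = Const c"
| "shiftg k (NotG i) = NotG (i + k)"
| "shiftg k (AndG i j) = AndG (i + k) (j + k)"
| "shiftg k (OrG i j) = OrG (i + k) (j + k)"

lemma wire_shift: "length A = k \<Longrightarrow> wire (A @ B) (i + k) = wire B i"
  by (auto simp: wire_def nth_append)

lemma wire_app_low: "i < length A \<Longrightarrow> wire (A @ B) i = wire A i"
  by (auto simp: wire_def nth_append)

lemma gate_val_shift: "length A = k \<Longrightarrow> gate_val x (A @ B) (shiftg k g) = gate_val x B g"
  by (cases g) (auto simp: wire_shift)

lemma vals_shift: "vals (gs @ map (shiftg (length gs)) hs) x = vals gs x @ vals hs x"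
proof (induction hs rule: rev_induct)
  case Nil then show ?case by simp
next
  case (snoc h hs)
  have "vals (gs @ map (shiftg (length gs)) (hs @ [h])) x
        = vals (gs @ map (shiftg (length gs)) hs) x @
          [gate_val x (vals (gs @ map (shiftg (length gs)) hs) x) (shiftg (length gs) h)]"
    by (metis append_assoc list.simps(8,9) map_append vals_snoc)
  also have "\<dots> = vals gs x @ vals hs x @ [gate_val x (vals hs x) h]"
    using snoc by (simp add: gate_val_shift)
  finally show ?case by simp
qed

fun remap :: "(nat \<Rightarrow> gate) \<Rightarrow> gate \<Rightarrow> gate" where
  "remap r (Input i) = r i"
| "remap r g = g"

lemma gate_val_remap:
  assumes "\<And>i vs. gate_val z vs (r i) = wire z' i"
  shows "gate_val z vs (remap r g) = gate_val z' vs g"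
  using assms by (cases g) auto

lemma vals_remap:
  assumes "\<And>i vs. gate_val z vs (r i) = wire z' i"
  shows "vals (map (remap r) gs) z = vals gs z'"
proof (induction gs rule: rev_induct)
  case Nil then show ?case by simp
next
  case (snoc g gs)
  then show ?case using gate_val_remap[OF assms] by simp
qed

definition outg :: "bool \<Rightarrow> circuit \<Rightarrow> gate" where
  "outg neg C = (case outs C of [q] \<Rightarrow> if neg then NotG q else AndG q q | _ \<Rightarrow> Const neg)"

lemma out1_vals: "out1 C z = (\<exists>q. outs C = [q] \<and> wire (vals (gates C) z) q)"
  unfolding out1_def circ_eval_vals
  by (cases "outs C" rule: remdups_adj.cases) auto

lemma gate_val_outg: "gate_val x (vals (gates C) z) (outg neg C) = (neg \<noteq> out1 C z)"
  unfolding out1_vals outg_def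
  by (cases "outs C" rule: remdups_adj.cases) auto

definition W1 :: "(nat \<Rightarrow> gate) \<Rightarrow> nat \<Rightarrow> circuit \<Rightarrow> circuit" where
  "W1 r j C = (let k = length (gates C) in
     \<lparr>gates = map (remap r) (gates C) @ [outg False C, Input j, OrG k (k+1)], outs = [k+2]\<rparr>)"

definition W2 :: "(nat \<Rightarrow> gate) \<Rightarrow> nat \<Rightarrow> circuit \<Rightarrow> circuit" where
  "W2 r j C = (let k = length (gates C) in
     \<lparr>gates = map (remap r) (gates C) @ [outg True C, Input j, NotG (k+1), OrG k (k+2)], outs = [k+3]\<rparr>)"

definition W3 :: "(nat \<Rightarrow> gate) \<Rightarrow> bool \<Rightarrow> circuit \<Rightarrow> circuit" where
  "W3 r neg C = (let k = length (gates C) in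
     \<lparr>gates = map (remap r) (gates C) @ [outg neg C], outs = [k]\<rparr>)"

lemma wire_snoc: "wire (xs @ [a]) i = (if i < length xs then wire xs i else if i = length xs then a else False)"
  by (auto simp: wire_def nth_append)

lemma wire_app: "wire (xs @ ys) i = (if i < length xs then wire xs i else wire ys (i - length xs))"
  by (auto simp: wire_def nth_append)

lemma vals_append: "vals (gs @ hs) x = foldl (\<lambda>vs g. vs @ [gate_val x vs g]) (vals gs x) hs"
  by (simp add: vals_def)

lemma out1_W1:
  assumes "\<And>i vs. gate_val z vs (r i) = wire z' i"
  shows "out1 (W1 r j C) z = (wire z j \<or> out1 C z')"
  using assms
  by (auto simp add: W1_def Let_def out1_def circ_eval_vals vals_append vals_remap gate_val_outg wire_app wire_def nth_append
        del: vals_snoc)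

lemma out1_W2:
  assumes "\<And>i vs. gate_val z vs (r i) = wire z' i"
  shows "out1 (W2 r j C) z = (\<not> wire z j \<or> \<not> out1 C z')"
  using assms
  by (auto simp add: W2_def Let_def out1_def circ_eval_vals vals_append vals_remap gate_val_outg wire_app wire_def nth_append
        del: vals_snoc)

lemma out1_W3:
  assumes "\<And>i vs. gate_val z vs (r i) = wire z' i"
  shows "out1 (W3 r neg C) z = (neg \<noteq> out1 C z')"
  using assms
  by (auto simp add: W3_def Let_def out1_def circ_eval_vals vals_append vals_remap gate_val_outg wire_app wire_def nth_append
        del: vals_snoc)

lemma size_W1: "circ_size (W1 r j C) \<le> circ_size C + 4"
  by (simp add: W1_def circ_size_def Let_def)
lemma size_W2: "circ_size (W2 r j C) \<le> circ_size C + 5"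
  by (simp add: W2_def circ_size_def Let_def)
lemma size_W3: "circ_size (W3 r neg C) \<le> circ_size C + 2"
  by (simp add: W3_def circ_size_def Let_def)



definition LL :: "nat \<Rightarrow> bool list set" where "LL k = {x. length x = k}"

lemma LL_eq: "LL k = {xs. set xs \<subseteq> UNIV \<and> length xs = k}" by (simp add: LL_def)
lemma finite_LL[simp]: "finite (LL k)"
  unfolding LL_eq by (rule finite_lists_length_eq) simp
lemma card_LL: "card (LL k) = 2 ^ k"
  unfolding LL_eq by (subst card_lists_length_eq) (simp_all add: card_UNIV_bool)

lemma Pr_sum: "Pr k P = (\<Sum>x\<in>LL k. if P x then 1 else 0) / 2 ^ k"
proof -
  have "(\<Sum>x\<in>LL k. if P x then 1 else (0::real)) = (\<Sum>x\<in>{x\<in>LL k. P x}. 1)"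
    by (rule sum.inter_filter[symmetric]) simp
  also have "\<dots> = real (card {x. length x = k \<and> P x})"
    by (simp add: LL_def)
  finally show ?thesis by (simp add: Pr_def)
qed

lemma Pr_cong: "(\<And>x. length x = k \<Longrightarrow> P x = Q x) \<Longrightarrow> Pr k P = Pr k Q"
  unfolding Pr_def by (metis (mono_tags, lifting) Collect_cong)

lemma Pr_True: "Pr k (\<lambda>_. True) = 1"
  unfolding Pr_def by (simp add: card_LL[unfolded LL_def])

lemma Pr_split: "Pr k P = Pr k (\<lambda>x. P x \<and> Q x) + Pr k (\<lambda>x. P x \<and> \<not> Q x)"
proof -
  have "(\<Sum>x\<in>LL k. if P x then 1 else (0::real)) =
        (\<Sum>x\<in>LL k. (if P x \<and> Q x then 1 else 0) + (if P x \<and> \<not> Q x then 1 else 0))"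
    by (rule sum.cong) auto
  then show ?thesis unfolding Pr_sum by (simp add: sum.distrib add_divide_distrib)
qed

lemma Pr_not: "Pr k (\<lambda>x. \<not> P x) = 1 - Pr k P"
  using Pr_split[of k "\<lambda>_. True" P] by (simp add: Pr_True)

lemma sum_LL_add: "(\<Sum>z\<in>LL (n + k). F z) = (\<Sum>a\<in>LL n. \<Sum>b\<in>LL k. F (a @ b))"
proof -
  have inj: "inj_on (\<lambda>(a, b). a @ b) (LL n \<times> LL k)"
    by (auto simp: inj_on_def LL_def)
  have img: "(\<lambda>(a, b). a @ b) ` (LL n \<times> LL k) = LL (n + k)"
  proof
    show "(\<lambda>(a, b). a @ b) ` (LL n \<times> LL k) \<subseteq> LL (n + k)" by (auto simp: LL_def)
    show "LL (n + k) \<subseteq> (\<lambda>(a, b). a @ b) ` (LL n \<times> LL k)"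
    proof
      fix z assume "z \<in> LL (n + k)"
      then have "(take n z, drop n z) \<in> LL n \<times> LL k" "z = (\<lambda>(a, b). a @ b) (take n z, drop n z)"
        by (auto simp: LL_def)
      then show "z \<in> (\<lambda>(a, b). a @ b) ` (LL n \<times> LL k)" by blast
    qed
  qed
  have "(\<Sum>z\<in>LL (n + k). F z) = (\<Sum>p\<in>LL n \<times> LL k. F ((\<lambda>(a, b). a @ b) p))"
    using sum.reindex[OF inj, of F] img by simp
  also have "\<dots> = (\<Sum>a\<in>LL n. \<Sum>b\<in>LL k. F (a @ b))"
    by (simp add: sum.cartesian_product split_def)
  finally show ?thesis .
qed

lemma LL1: "LL 1 = {[False], [True]}"
  by (auto simp: LL_def length_Suc_conv)

lemma LL1': "LL (Suc 0) = {[False], [True]}" using LL1 by simp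

lemma Pr_Suc: "Pr (Suc n) P = (Pr n (\<lambda>y. P (y @ [False])) + Pr n (\<lambda>y. P (y @ [True]))) / 2"
proof -
  have "(\<Sum>z\<in>LL (n + 1). (if P z then 1 else (0::real))) =
        (\<Sum>a\<in>LL n. (if P (a @ [False]) then 1 else 0) + (if P (a @ [True]) then 1 else 0))"
    using sum_LL_add[of "\<lambda>z. if P z then 1 else (0::real)" n 1] by (simp add: LL1')
  then show ?thesis unfolding Pr_sum by (simp add: sum.distrib add_divide_distrib)
qed

lemma Pr_take: assumes "n \<le> M" shows "Pr M (\<lambda>y. Q (take n y)) = Pr n Q"
proof -
  obtain k where M: "M = n + k" using assms le_Suc_ex by blast
  have "(\<Sum>z\<in>LL (n + k). (if Q (take n z) then 1 else (0::real))) =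
        (\<Sum>a\<in>LL n. (\<Sum>b\<in>LL k. if Q a then 1 else 0))"
    by (simp add: sum_LL_add) (rule sum.cong, auto simp: LL_def)
  also have "\<dots> = 2 ^ k * (\<Sum>a\<in>LL n. if Q a then 1 else 0)"
    by (simp add: card_LL sum_distrib_left)
  finally show ?thesis unfolding Pr_sum M by (simp add: power_add)
qed




definition rA :: "nat \<Rightarrow> nat \<Rightarrow> gate" where
  "rA n i = (if i < n then Input i else if i < 2*n then Const True else Input (i - n + 1))"

lemma rA_ok: "length y = n \<Longrightarrow> gate_val (y @ c # w) vs (rA n i) = wire (y @ replicate n True @ w) i"
  by (auto simp: rA_def wire_def nth_append)

definition rB :: "nat \<Rightarrow> nat \<Rightarrow> bool \<Rightarrow> nat \<Rightarrow> gate" where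
  "rB n M c i = (if i < n then Input i else if i = n then Const c else Input (i + M - 1))"

lemma rB_ok: "length y = M \<Longrightarrow> n \<le> M \<Longrightarrow>
   gate_val (y @ replicate n True @ w) vs (rB n M c i) = wire (take n y @ c # w) i"
  by (auto simp: rB_def wire_def nth_append min_def)

lemma ex_len: "\<exists>w::bool list. length w = l" by (rule exI[of _ "replicate l False"]) simp

lemma ndA1: "length y = n \<Longrightarrow>
  nd_accepts (W1 (rA n) n C, l) (y @ [c]) = (c \<or> nd_accepts (C, l) (y @ replicate n True))"
  unfolding nd_accepts_def using ex_len[of l]
  by (auto simp: out1_W1[OF rA_ok] wire_def nth_append)

lemma ndA2: "length y = n \<Longrightarrow>
  nd_accepts (W2 (rA n) n C, l) (y @ [c]) = (\<not> c \<or> \<not> cond_accepts (C, l) (y @ replicate n True))"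
  unfolding nd_accepts_def cond_accepts_def using ex_len[of l]
  by (auto simp: out1_W2[OF rA_ok] wire_def nth_append)

lemma ndB1: "length y = M \<Longrightarrow> n \<le> M \<Longrightarrow>
  nd_accepts (W3 (rB n M False) False C, l) (y @ replicate n True) = nd_accepts (C, l) (take n y @ [False])"
  unfolding nd_accepts_def
  by (simp add: out1_W3[OF rB_ok])

lemma condB2: "length y = M \<Longrightarrow> n \<le> M \<Longrightarrow>
  cond_accepts (W3 (rB n M True) True C, l) (y @ replicate n True) = (\<not> nd_accepts (C, l) (take n y @ [True]))"
  unfolding nd_accepts_def cond_accepts_def
  by (simp add: out1_W3[OF rB_ok])

definition comb :: "nat \<Rightarrow> circuit \<Rightarrow> circuit \<Rightarrow> circuit" where
  "comb n Cf Cb = (let k = length (gates Cf); kb = length (gates Cb) in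
     \<lparr>gates = gates Cf @ map (shiftg k) (gates Cb),
      outs = map (\<lambda>q. if q < k then q else k + kb) (take n (outs Cf)) @ map (\<lambda>q. q + k) (outs Cb)\<rparr>)"

lemma comb_eval: "circ_eval (comb n Cf Cb) x = take n (circ_eval Cf x) @ circ_eval Cb x"
  by (auto simp: comb_def Let_def circ_eval_vals vals_shift take_map wire_shift wire_app wire_def nth_append)

lemma comb_size: "circ_size (comb n Cf Cb) \<le> circ_size Cf + circ_size Cb"
  by (simp add: comb_def Let_def circ_size_def)




lemma nd_family_bound:
  assumes "poly_size_nd_family D"
    and "\<And>n. circ_size (fst (E n)) \<le> circ_size (fst (D n)) + c" and "\<And>n. snd (E n) = snd (D n)"
  shows "poly_size_nd_family E"
proof -
  obtain p where p: "\<And>n. real (circ_size (fst (D n)) + snd (D n)) \<le> poly p (real n)"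
    using assms(1) unfolding poly_size_nd_family_def by blast
  have "real (circ_size (fst (E n)) + snd (E n)) \<le> poly (p + [:real c:]) (real n)" for n
  proof -
    have "real (circ_size (fst (E n)) + snd (E n)) \<le> real (circ_size (fst (D n)) + snd (D n)) + real c"
      using assms(2)[of n] assms(3)[of n] by simp
    then show ?thesis using p[of n] by simp
  qed
  then show ?thesis unfolding poly_size_nd_family_def by blast
qed

lemma fam_bound:
  assumes "poly_size_family C" and "\<And>n. circ_size (E n) \<le> circ_size (C n)"
  shows "poly_size_family E"
proof -
  obtain p where p: "\<And>n. real (circ_size (C n)) \<le> poly p (real n)"
    using assms(1) unfolding poly_size_family_def by blast
  have "real (circ_size (E n)) \<le> poly p (real n)" for n
    using p[of n] assms(2)[of n] by (meson of_nat_le_iff order_trans)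
  then show ?thesis unfolding poly_size_family_def by blast
qed

lemma bit_to_core:
  assumes sb: "super_bit g"
  shows "\<exists>f m b. (\<forall>x. length (f x) = m (length x)) \<and> (\<forall>n. n \<le> m n) \<and>
              poly_computable f \<and> super_core b f m"
proof -
  have len: "\<And>x. length (g x) = Suc (length x)" and pc: "poly_computable g"
   and dist: "\<And>D p. poly_size_nd_family D \<Longrightarrow> pos_poly p \<Longrightarrow> \<forall>\<^sub>F n in sequentially.
           Pr (Suc n) (\<lambda>y. nd_accepts (D n) y) - Pr n (\<lambda>x. nd_accepts (D n) (g x))
             < 1 / poly p (real n)"
    using sb unfolding super_bit_def by auto
  define f where "f x = butlast (g x)" for x
  define b where "b x = last (g x)" for x
  have gfb: "g x = f x @ [b x]" for x
  proof -
    have "g x \<noteq> []" using len[of x] by auto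
    then show ?thesis unfolding f_def b_def by simp
  qed
  have lenf: "length (f x) = length x" for x using len by (simp add: f_def)
  obtain C where C: "poly_size_family C" "\<And>n x. length x = n \<Longrightarrow> circ_eval (C n) x = g x"
    using pc unfolding poly_computable_def by blast
  have pcf: "poly_computable f"
    unfolding poly_computable_def
  proof (intro exI conjI allI impI)
    show "poly_size_family (\<lambda>n. C n\<lparr>outs := butlast (outs (C n))\<rparr>)"
      by (rule fam_bound[OF C(1)]) (simp add: circ_size_def)
    fix n x assume "length (x::bool list) = n"
    then show "circ_eval (C n\<lparr>outs := butlast (outs (C n))\<rparr>) x = f x"
      using C(2)[of x n] by (simp add: circ_eval_vals map_butlast f_def)
  qed
  have ne: "outs (C n) \<noteq> []" for n
  proof -
    have "length (circ_eval (C n) (replicate n False)) = Suc n"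
      using C(2)[of "replicate n False" n] len by simp
    then show ?thesis by (auto simp: circ_eval_vals)
  qed
  have pcb: "poly_computable_pred b"
    unfolding poly_computable_pred_def poly_computable_def
  proof (intro exI conjI allI impI)
    show "poly_size_family (\<lambda>n. C n\<lparr>outs := [last (outs (C n))]\<rparr>)"
      by (rule fam_bound[OF C(1)]) (use ne in \<open>simp add: circ_size_def Suc_leI\<close>)
    fix n x assume "length (x::bool list) = n"
    then have e: "map (wire (vals (gates (C n)) x)) (outs (C n)) = g x"
      using C(2)[of x n] by (simp add: circ_eval_vals)
    then have "outs (C n) \<noteq> []" using len[of x] by auto
    then show "circ_eval (C n\<lparr>outs := [last (outs (C n))]\<rparr>) x = [b x]"
    proof -
      have "wire (vals (gates (C n)) x) (last (outs (C n))) = last (g x)"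
        using e \<open>outs (C n) \<noteq> []\<close> by (metis last_map)
      then show ?thesis by (simp add: circ_eval_vals b_def)
    qed
  qed
  have core: "super_core b f (\<lambda>n. n)"
    unfolding super_core_def
  proof (intro conjI pcb notI)
    assume "\<exists>A1 A2 p. poly_size_nd_family A1 \<and> poly_size_nd_family A2 \<and> pos_poly p \<and>
          (\<exists>\<^sub>F n in sequentially.
             Pr n (\<lambda>x. \<not> nd_accepts (A1 n) (f x @ replicate n True) \<and> \<not> b x)
               + 1/2 * Pr n (\<lambda>y. nd_accepts (A1 n) (y @ replicate n True))
               \<ge> 1/2 + 1 / poly p (real n)
           \<or> Pr n (\<lambda>x. cond_accepts (A2 n) (f x @ replicate n True) \<and> b x)
               + 1/2 * Pr n (\<lambda>y. \<not> cond_accepts (A2 n) (y @ replicate n True))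
               \<ge> 1/2 + 1 / poly p (real n))"
    then obtain A1 A2 p where A1: "poly_size_nd_family A1" and A2: "poly_size_nd_family A2"
      and pp: "pos_poly p" and fr: "(\<exists>\<^sub>F n in sequentially.
             Pr n (\<lambda>x. \<not> nd_accepts (A1 n) (f x @ replicate n True) \<and> \<not> b x)
               + 1/2 * Pr n (\<lambda>y. nd_accepts (A1 n) (y @ replicate n True))
               \<ge> 1/2 + 1 / poly p (real n)) \<or> (\<exists>\<^sub>F n in sequentially. 
              Pr n (\<lambda>x. cond_accepts (A2 n) (f x @ replicate n True) \<and> b x)
               + 1/2 * Pr n (\<lambda>y. \<not> cond_accepts (A2 n) (y @ replicate n True))
               \<ge> 1/2 + 1 / poly p (real n))"
      unfolding frequently_disj_iff by blast
    from fr show False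
    proof
      assume fr1: "\<exists>\<^sub>F n in sequentially.
             Pr n (\<lambda>x. \<not> nd_accepts (A1 n) (f x @ replicate n True) \<and> \<not> b x)
               + 1/2 * Pr n (\<lambda>y. nd_accepts (A1 n) (y @ replicate n True))
               \<ge> 1/2 + 1 / poly p (real n)"
      define D where "D n = (W1 (rA n) n (fst (A1 n)), snd (A1 n))" for n
      have "poly_size_nd_family D"
        by (rule nd_family_bound[OF A1, where c=4]) (simp_all add: D_def size_W1)
      then have ev: "\<forall>\<^sub>F n in sequentially.
           Pr (Suc n) (\<lambda>y. nd_accepts (D n) y) - Pr n (\<lambda>x. nd_accepts (D n) (g x))
             < 1 / poly p (real n)" using dist pp by blast
      have key: "Pr n (\<lambda>x. \<not> nd_accepts (A1 n) (f x @ replicate n True) \<and> \<not> b x)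
               + 1/2 * Pr n (\<lambda>y. nd_accepts (A1 n) (y @ replicate n True))
             = 1/2 + (Pr (Suc n) (\<lambda>y. nd_accepts (D n) y) - Pr n (\<lambda>x. nd_accepts (D n) (g x)))" for n
      proof -
        define a where "a y = nd_accepts (A1 n) (y @ replicate n True)" for y
        have nd: "length y = n \<Longrightarrow> nd_accepts (D n) (y @ [c]) = (c \<or> a y)" for y c
          unfolding D_def a_def by (simp add: ndA1)
        have U0: "Pr n (\<lambda>y. nd_accepts (D n) (y @ [False])) = Pr n a"
          by (rule Pr_cong) (simp add: nd)
        have U1: "Pr n (\<lambda>y. nd_accepts (D n) (y @ [True])) = Pr n (\<lambda>_. True)"
          by (rule Pr_cong) (simp add: nd)
        have U: "Pr (Suc n) (\<lambda>y. nd_accepts (D n) y) = (Pr n a + 1) / 2"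
          unfolding Pr_Suc U0 U1 Pr_True ..
        have G1: "Pr n (\<lambda>x. nd_accepts (D n) (g x)) = Pr n (\<lambda>x. \<not> (\<not> a (f x) \<and> \<not> b x))"
          by (rule Pr_cong) (auto simp: gfb nd lenf)
        have E: "Pr n (\<lambda>x. \<not> nd_accepts (A1 n) (f x @ replicate n True) \<and> \<not> b x)
               = Pr n (\<lambda>x. \<not> a (f x) \<and> \<not> b x)" by (simp add: a_def)
        show ?thesis unfolding G1 Pr_not U E by (simp add: a_def[abs_def] algebra_simps)
      qed
      have "\<not> (\<exists>\<^sub>F n in sequentially. Pr (Suc n) (\<lambda>y. nd_accepts (D n) y) - Pr n (\<lambda>x. nd_accepts (D n) (g x))
             \<ge> 1 / poly p (real n))"
        unfolding not_frequently by (rule eventually_mono[OF ev]) simp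
      moreover have "\<exists>\<^sub>F n in sequentially. Pr (Suc n) (\<lambda>y. nd_accepts (D n) y) - Pr n (\<lambda>x. nd_accepts (D n) (g x))
             \<ge> 1 / poly p (real n)"
        apply (rule frequently_elim1[OF fr1])
        subgoal for i using key[of i] by linarith
        done
      ultimately show False by blast
    next
      assume fr2: "\<exists>\<^sub>F n in sequentially.
              Pr n (\<lambda>x. cond_accepts (A2 n) (f x @ replicate n True) \<and> b x)
               + 1/2 * Pr n (\<lambda>y. \<not> cond_accepts (A2 n) (y @ replicate n True))
               \<ge> 1/2 + 1 / poly p (real n)"
      define D where "D n = (W2 (rA n) n (fst (A2 n)), snd (A2 n))" for n
      have "poly_size_nd_family D"
        by (rule nd_family_bound[OF A2, where c=5]) (simp_all add: D_def size_W2)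
      then have ev: "\<forall>\<^sub>F n in sequentially.
           Pr (Suc n) (\<lambda>y. nd_accepts (D n) y) - Pr n (\<lambda>x. nd_accepts (D n) (g x))
             < 1 / poly p (real n)" using dist pp by blast
      have key: "Pr n (\<lambda>x. cond_accepts (A2 n) (f x @ replicate n True) \<and> b x)
               + 1/2 * Pr n (\<lambda>y. \<not> cond_accepts (A2 n) (y @ replicate n True))
             = 1/2 + (Pr (Suc n) (\<lambda>y. nd_accepts (D n) y) - Pr n (\<lambda>x. nd_accepts (D n) (g x)))" for n
      proof -
        define a where "a y = cond_accepts (A2 n) (y @ replicate n True)" for y
        have nd: "length y = n \<Longrightarrow> nd_accepts (D n) (y @ [c]) = (\<not> c \<or> \<not> a y)" for y c
          unfolding D_def a_def by (simp add: ndA2)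
        have U0: "Pr n (\<lambda>y. nd_accepts (D n) (y @ [False])) = Pr n (\<lambda>_. True)"
          by (rule Pr_cong) (simp add: nd)
        have U1: "Pr n (\<lambda>y. nd_accepts (D n) (y @ [True])) = Pr n (\<lambda>y. \<not> a y)"
          by (rule Pr_cong) (simp add: nd)
        have U: "Pr (Suc n) (\<lambda>y. nd_accepts (D n) y) = (1 + Pr n (\<lambda>y. \<not> a y)) / 2"
          unfolding Pr_Suc U0 U1 Pr_True ..
        have G1: "Pr n (\<lambda>x. nd_accepts (D n) (g x)) = Pr n (\<lambda>x. \<not> (a (f x) \<and> b x))"
          by (rule Pr_cong) (auto simp: gfb nd lenf)
        have E: "Pr n (\<lambda>x. cond_accepts (A2 n) (f x @ replicate n True) \<and> b x)
               = Pr n (\<lambda>x. a (f x) \<and> b x)" by (simp add: a_def)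
        show ?thesis unfolding G1 Pr_not U E by (simp add: a_def[abs_def] field_simps)
      qed
      have "\<not> (\<exists>\<^sub>F n in sequentially. Pr (Suc n) (\<lambda>y. nd_accepts (D n) y) - Pr n (\<lambda>x. nd_accepts (D n) (g x))
             \<ge> 1 / poly p (real n))"
        unfolding not_frequently by (rule eventually_mono[OF ev]) simp
      moreover have "\<exists>\<^sub>F n in sequentially. Pr (Suc n) (\<lambda>y. nd_accepts (D n) y) - Pr n (\<lambda>x. nd_accepts (D n) (g x))
             \<ge> 1 / poly p (real n)"
        apply (rule frequently_elim1[OF fr2])
        subgoal for i using key[of i] by linarith
        done
      ultimately show False by blast
    qed
  qed
  show ?thesis
    by (rule exI[of _ f], rule exI[of _ "\<lambda>n. n"], rule exI[of _ b]) (simp add: lenf pcf core)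
qed




lemma core_to_bit:
  assumes lenf: "\<forall>x. length (f x) = m (length x)" and mge: "\<forall>n. n \<le> m n"
    and pcf: "poly_computable f" and sc: "super_core b f m"
  shows "\<exists>g. super_bit g"
proof -
  define g where "g x = take (length x) (f x) @ [b x]" for x
  have pcb: "poly_computable_pred b" and nosc: "\<not> (\<exists>A1 A2 p. poly_size_nd_family A1 \<and> poly_size_nd_family A2 \<and> pos_poly p \<and>
          (\<exists>\<^sub>F n in sequentially.
             Pr n (\<lambda>x. \<not> nd_accepts (A1 n) (f x @ replicate n True) \<and> \<not> b x)
               + 1/2 * Pr (m n) (\<lambda>y. nd_accepts (A1 n) (y @ replicate n True))
               \<ge> 1/2 + 1 / poly p (real n)
           \<or> Pr n (\<lambda>x. cond_accepts (A2 n) (f x @ replicate n True) \<and> b x)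
               + 1/2 * Pr (m n) (\<lambda>y. \<not> cond_accepts (A2 n) (y @ replicate n True))
               \<ge> 1/2 + 1 / poly p (real n)))"
    using sc unfolding super_core_def by auto
  have leng: "length (g x) = Suc (length x)" for x
    using lenf mge[rule_format, of "length x"] by (simp add: g_def min_def)
  obtain Cf where Cf: "poly_size_family Cf" "\<And>n x. length x = n \<Longrightarrow> circ_eval (Cf n) x = f x"
    using pcf unfolding poly_computable_def by blast
  obtain Cb where Cb: "poly_size_family Cb" "\<And>n x. length x = n \<Longrightarrow> circ_eval (Cb n) x = [b x]"
    using pcb unfolding poly_computable_pred_def poly_computable_def by blast
  have pcg: "poly_computable g"
    unfolding poly_computable_def
  proof (intro exI conjI allI impI)
    obtain p1 where p1: "\<And>n. real (circ_size (Cf n)) \<le> poly p1 (real n)"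
      using Cf(1) unfolding poly_size_family_def by blast
    obtain p2 where p2: "\<And>n. real (circ_size (Cb n)) \<le> poly p2 (real n)"
      using Cb(1) unfolding poly_size_family_def by blast
    have "real (circ_size (comb n (Cf n) (Cb n))) \<le> poly (p1 + p2) (real n)" for n
    proof -
      have "real (circ_size (comb n (Cf n) (Cb n))) \<le> real (circ_size (Cf n)) + real (circ_size (Cb n))"
        using comb_size[of n "Cf n" "Cb n"] by simp
      then show ?thesis using p1[of n] p2[of n] by simp
    qed
    then show "poly_size_family (\<lambda>n. comb n (Cf n) (Cb n))"
      unfolding poly_size_family_def by blast
    fix n x assume "length (x::bool list) = n"
    then show "circ_eval (comb n (Cf n) (Cb n)) x = g x"
      by (simp add: comb_eval Cf(2) Cb(2) g_def)
  qed
  have "super_bit g"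
    unfolding super_bit_def
  proof (intro conjI allI impI pcg leng)
    fix D p assume Dp: "poly_size_nd_family D \<and> pos_poly p"
    show "\<forall>\<^sub>F n in sequentially.
           Pr (Suc n) (\<lambda>y. nd_accepts (D n) y) - Pr n (\<lambda>x. nd_accepts (D n) (g x))
             < 1 / poly p (real n)"
    proof (rule ccontr)
      assume "\<not> ?thesis"
      then have fr: "\<exists>\<^sub>F n in sequentially.
           Pr (Suc n) (\<lambda>y. nd_accepts (D n) y) - Pr n (\<lambda>x. nd_accepts (D n) (g x))
             \<ge> 1 / poly p (real n)"
        unfolding not_eventually by (simp add: not_less)
      define A1 where "A1 n = (W3 (rB n (m n) False) False (fst (D n)), snd (D n))" for n
      define A2 where "A2 n = (W3 (rB n (m n) True) True (fst (D n)), snd (D n))" for n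
      define p' where "p' = smult 2 p"
      have A1f: "poly_size_nd_family A1"
        by (rule nd_family_bound[where c=2]) (use Dp in \<open>simp_all add: A1_def size_W3[simplified]\<close>)
      have A2f: "poly_size_nd_family A2"
        by (rule nd_family_bound[where c=2]) (use Dp in \<open>simp_all add: A2_def size_W3[simplified]\<close>)
      have pp': "pos_poly p'" using Dp by (simp add: p'_def pos_poly_def lead_coeff_smult)
      have key: "Pr n (\<lambda>x. \<not> nd_accepts (A1 n) (f x @ replicate n True) \<and> \<not> b x)
               + 1/2 * Pr (m n) (\<lambda>y. nd_accepts (A1 n) (y @ replicate n True))
           + (Pr n (\<lambda>x. cond_accepts (A2 n) (f x @ replicate n True) \<and> b x)
               + 1/2 * Pr (m n) (\<lambda>y. \<not> cond_accepts (A2 n) (y @ replicate n True)))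
           = 1 + (Pr (Suc n) (\<lambda>y. nd_accepts (D n) y) - Pr n (\<lambda>x. nd_accepts (D n) (g x)))" for n
      proof -
        define a0 where "a0 y = nd_accepts (D n) (y @ [False])" for y
        define a1 where "a1 y = nd_accepts (D n) (y @ [True])" for y
        define t where "t x = take n (f x)" for x
        have nm: "n \<le> m n" using mge by simp
        have lf: "length x = n \<Longrightarrow> length (f x) = m n" for x using lenf by simp
        have e1: "Pr n (\<lambda>x. \<not> nd_accepts (A1 n) (f x @ replicate n True) \<and> \<not> b x)
                 = Pr n (\<lambda>x. \<not> b x \<and> \<not> a0 (t x))"
          by (rule Pr_cong) (auto simp: A1_def ndB1[OF lf nm] a0_def t_def)
        have e2: "Pr (m n) (\<lambda>y. nd_accepts (A1 n) (y @ replicate n True)) = Pr n a0"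
        proof -
          have "Pr (m n) (\<lambda>y. nd_accepts (A1 n) (y @ replicate n True)) = Pr (m n) (\<lambda>y. a0 (take n y))"
            by (rule Pr_cong) (simp add: A1_def ndB1[OF _ nm] a0_def)
          then show ?thesis using Pr_take[OF nm] by simp
        qed
        have e3: "Pr n (\<lambda>x. cond_accepts (A2 n) (f x @ replicate n True) \<and> b x)
                 = Pr n (\<lambda>x. b x \<and> \<not> a1 (t x))"
          by (rule Pr_cong) (auto simp: A2_def condB2[OF lf nm] a1_def t_def)
        have e4: "Pr (m n) (\<lambda>y. \<not> cond_accepts (A2 n) (y @ replicate n True)) = Pr n a1"
        proof -
          have "Pr (m n) (\<lambda>y. \<not> cond_accepts (A2 n) (y @ replicate n True)) = Pr (m n) (\<lambda>y. a1 (take n y))"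
            by (rule Pr_cong) (simp add: A2_def condB2[OF _ nm] a1_def)
          then show ?thesis using Pr_take[OF nm] by simp
        qed
        have U: "Pr (Suc n) (\<lambda>y. nd_accepts (D n) y) = (Pr n a0 + Pr n a1) / 2"
          unfolding Pr_Suc a0_def a1_def ..
        have G: "Pr n (\<lambda>x. nd_accepts (D n) (g x)) = Pr n (\<lambda>x. b x \<and> a1 (t x)) + Pr n (\<lambda>x. \<not> b x \<and> a0 (t x))"
        proof -
          have "Pr n (\<lambda>x. nd_accepts (D n) (g x)) = Pr n (\<lambda>x. nd_accepts (D n) (g x) \<and> b x) + Pr n (\<lambda>x. nd_accepts (D n) (g x) \<and> \<not> b x)"
            by (rule Pr_split)
          also have "Pr n (\<lambda>x. nd_accepts (D n) (g x) \<and> b x) = Pr n (\<lambda>x. b x \<and> a1 (t x))"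
            by (rule Pr_cong) (auto simp: g_def a1_def t_def)
          also have "Pr n (\<lambda>x. nd_accepts (D n) (g x) \<and> \<not> b x) = Pr n (\<lambda>x. \<not> b x \<and> a0 (t x))"
            by (rule Pr_cong) (auto simp: g_def a0_def t_def)
          finally show ?thesis .
        qed
        have one: "1 = Pr n (\<lambda>x. b x) + Pr n (\<lambda>x. \<not> b x)"
          using Pr_split[of n "\<lambda>_. True" b] by (simp add: Pr_True)
        have sb1: "Pr n (\<lambda>x. b x) = Pr n (\<lambda>x. b x \<and> a1 (t x)) + Pr n (\<lambda>x. b x \<and> \<not> a1 (t x))"
          by (rule Pr_split)
        have sb0: "Pr n (\<lambda>x. \<not> b x) = Pr n (\<lambda>x. \<not> b x \<and> a0 (t x)) + Pr n (\<lambda>x. \<not> b x \<and> \<not> a0 (t x))"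
          by (rule Pr_split)
        show ?thesis unfolding e1 e2 e3 e4 U G using one sb1 sb0 by (simp add: field_simps)
      qed
      have "\<exists>\<^sub>F n in sequentially.
             Pr n (\<lambda>x. \<not> nd_accepts (A1 n) (f x @ replicate n True) \<and> \<not> b x)
               + 1/2 * Pr (m n) (\<lambda>y. nd_accepts (A1 n) (y @ replicate n True))
               \<ge> 1/2 + 1 / poly p' (real n)
           \<or> Pr n (\<lambda>x. cond_accepts (A2 n) (f x @ replicate n True) \<and> b x)
               + 1/2 * Pr (m n) (\<lambda>y. \<not> cond_accepts (A2 n) (y @ replicate n True))
               \<ge> 1/2 + 1 / poly p' (real n)"
        apply (rule frequently_elim1[OF fr])
        subgoal for i
        proof -
          assume h: "1 / poly p (real i) \<le> Pr (Suc i) (nd_accepts (D i)) - Pr i (\<lambda>x. nd_accepts (D i) (g x))"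
          have pe: "1 / poly p' (real i) = (1 / poly p (real i)) / 2" by (simp add: p'_def)
          show ?thesis using key[of i] h unfolding pe by linarith
        qed
        done
      then show False using nosc A1f A2f pp' by blast
    qed
  qed
  then show ?thesis by blast
qed



theorem theorem6p6:
  shows "(\<exists>f m b. (\<forall>x. length (f x) = m (length x)) \<and> (\<forall>n. n \<le> m n) \<and>
              poly_computable f \<and> super_core b f m)
         \<longleftrightarrow> (\<exists>g. super_bit g)"
proof
  assume "\<exists>f m b. (\<forall>x. length (f x) = m (length x)) \<and> (\<forall>n. n \<le> m n) \<and>
              poly_computable f \<and> super_core b f m"
  then show "\<exists>g. super_bit g" using core_to_bit by blast
next
  assume "\<exists>g. super_bit g"
  then show "\<exists>f m b. (\<forall>x. length (f x) = m (length x)) \<and> (\<forall>n. n \<le> m n) \<and>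
              poly_computable f \<and> super_core b f m" using bit_to_core by blast
qed

end
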